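(* Let $V_\theta$ be a real vector space of finite dimension $D\ge 1$, and let $M\subset V_\theta\times[0,1]$ be a dichotomous item response hypersurface (IRHS), with associated function $f:V_\theta\to[0,1]$ (so $M=\{(\theta,f(\theta)):\theta\in V_\theta\}$). Then the MIRT model given by $M$ is a trivial extension of a unidimensional IRT model: there exist a linear subspace $H\subset V_\theta$ of dimension $D-1$ and a vector $u\in V_\theta\setminus H$ such that $$f(\mu u+h)=f(\mu u)\quad\text{for all }\mu\in\mathbb{R},\ h\in H.$$ In particular $f$ is determined by the monotonic function $\mu\mapsto f(\mu u)$, $\mathbb{R}\to[0,1]$.
   Context: A dichotomous item response hypersurface (IRHS) is a $D=\dim V_\theta$ dimensional smooth submanifold $M$ of $V_\theta\times[0,1]$ such that for any two vectors $v,w\in V_\theta$, the intersection of $(w+\mathbb{R}\cdot v)\times[0,1]$ with $M$ is the graph of a monotonic function $w+\mathbb{R}\cdot v\to[0,1]$, where $w+\mathbb{R}\cdot v=\{w+\lambda v:\lambda\in\mathbb{R}\}$. A function $g:w+\mathbb{R}\cdot v\to[0,1]$ is called monotonic if either $g(w+\lambda v)\le g(w+\mu v)$ for all $\lambda\le\mu$, or $g(w+\lambda v)\ge g(w+\mu v)$ for all $\lambda\le\mu$. (Taking $v=0$ shows that $M$ is the graph of a function $f:V_\theta\to[0,1]$; $f$ is the function describing $M$.) A MIRT model is given by an IRHS. A unidimensional IRT model is a monotonic item response function $\mathbb{R}\to[0,1]$. *)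

theory Defs
  imports "HOL-Analysis.Analysis"
begin

fun Ck_on :: "nat \<Rightarrow> 'a::euclidean_space set \<Rightarrow> ('a \<Rightarrow> 'b::euclidean_space) \<Rightarrow> bool" where
  "Ck_on 0 S f = continuous_on S f"
| "Ck_on (Suc k) S f = (f differentiable_on S \<and>
      (\<forall>v. Ck_on k S (\<lambda>x. frechet_derivative f (at x) v)))"

definition smooth_on :: "'a::euclidean_space set \<Rightarrow> ('a \<Rightarrow> 'b::euclidean_space) \<Rightarrow> bool" where
  "smooth_on S f \<longleftrightarrow> (\<forall>k. Ck_on k S f)"

text \<open>M is a smooth embedded submanifold of the euclidean space 'e whose dimension is
DIM('p): locally M is the image of an open subset of 'p under a smooth immersion
which is a homeomorphism onto a relatively open piece of M.\<close>
definition smooth_submanifold :: "'p::euclidean_space itself \<Rightarrow> 'e::euclidean_space set \<Rightarrow> bool" where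
  "smooth_submanifold (_::'p itself) M \<longleftrightarrow>
     (\<forall>p\<in>M. \<exists>(U::'p set) W \<phi> \<psi>. open U \<and> open W \<and> p \<in> W \<and>
        smooth_on U \<phi> \<and> homeomorphism U (M \<inter> W) \<phi> \<psi> \<and>
        (\<forall>x\<in>U. inj (frechet_derivative \<phi> (at x))))"

definition monotonic_on_line :: "'v::real_vector \<Rightarrow> 'v \<Rightarrow> ('v \<Rightarrow> real) \<Rightarrow> bool" where
  "monotonic_on_line w v g \<longleftrightarrow>
     (\<forall>a b::real. a \<le> b \<longrightarrow> g (w + a *\<^sub>R v) \<le> g (w + b *\<^sub>R v)) \<or>
     (\<forall>a b::real. a \<le> b \<longrightarrow> g (w + a *\<^sub>R v) \<ge> g (w + b *\<^sub>R v))"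

definition line :: "'v::real_vector \<Rightarrow> 'v \<Rightarrow> 'v set" where
  "line w v = {w + a *\<^sub>R v | a. True}"

definition IRHS :: "('v::euclidean_space \<times> real) set \<Rightarrow> bool" where
  "IRHS M \<longleftrightarrow>
     M \<subseteq> UNIV \<times> {0..1} \<and>
     smooth_submanifold TYPE('v) M \<and>
     (\<forall>v w. \<exists>g::'v \<Rightarrow> real. (\<forall>x\<in>line w v. g x \<in> {0..1}) \<and>
        M \<inter> (line w v \<times> {0..1}) = {(x, g x) | x. x \<in> line w v} \<and>
        monotonic_on_line w v g)"

end

theory Submission
  imports Defs
begin

lemma graph_mem:
  assumes "M = {(\<theta>, f \<theta>) | \<theta>. True}" "z \<in> M"
  shows "snd z = f (fst z)"
  using assms by auto

lemma irhs_cont: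
  fixes M :: "('v::euclidean_space \<times> real) set" and f :: "'v \<Rightarrow> real"
  assumes "IRHS M"
    and Mf: "M = {(\<theta>, f \<theta>) | \<theta>. True}"
  shows "continuous_on UNIV f"
proof (rule continuous_at_imp_continuous_on, intro ballI)
  fix \<theta> :: 'v
  have pM: "(\<theta>, f \<theta>) \<in> M" using Mf by auto
  from assms(1) have sm: "smooth_submanifold TYPE('v) M" by (simp add: IRHS_def)
  obtain U :: "'v set" and W \<phi> \<psi> where U: "open U" "open W" "(\<theta>, f \<theta>) \<in> W"
      and hom: "homeomorphism U (M \<inter> W) \<phi> \<psi>"
    using bspec[OF sm[unfolded smooth_submanifold_def] pM] by blast
  have cphi: "continuous_on U \<phi>" and img: "\<phi> ` U = M \<inter> W"
    and inv: "\<And>x. x \<in> U \<Longrightarrow> \<psi> (\<phi> x) = x"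
    using hom by (auto simp: homeomorphism_def)
  define h where "h = fst \<circ> \<phi>"
  have ch: "continuous_on U h" unfolding h_def
    by (intro continuous_on_compose cphi continuous_on_fst continuous_on_id)
  have phiM: "\<phi> x \<in> M" if "x \<in> U" for x using img that by auto
  have phieq: "\<phi> x = (h x, f (h x))" if "x \<in> U" for x
    using graph_mem[OF Mf phiM[OF that]] unfolding h_def by (metis comp_apply prod.collapse)
  have injh: "inj_on h U"
  proof (rule inj_onI)
    fix x y assume "x \<in> U" "y \<in> U" "h x = h y"
    then have "\<phi> x = \<phi> y" using phieq by metis
    then show "x = y" using inv \<open>x \<in> U\<close> \<open>y \<in> U\<close> by metis
  qed
  have oh: "open (h ` U)" by (rule invariance_of_domain[OF ch U(1) injh])
  have th: "\<theta> \<in> h ` U"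
  proof -
    have "(\<theta>, f \<theta>) \<in> \<phi> ` U" using img pM U(3) by auto
    then obtain x where "x \<in> U" "\<phi> x = (\<theta>, f \<theta>)" by auto
    then show ?thesis using phieq by (metis image_eqI prod.inject)
  qed
  have cg: "continuous_on (h ` U) (inv_into U h)"
    by (rule continuous_on_inverse_open[OF U(1) ch]) (auto simp: injh)
  have cf: "continuous_on (h ` U) (\<lambda>y. snd (\<phi> (inv_into U h y)))"
    by (intro continuous_on_compose2[OF continuous_on_snd[OF continuous_on_id]]
        continuous_on_compose2[OF cphi cg]) (auto simp: inv_into_into)
  have "continuous_on (h ` U) f"
  proof (rule continuous_on_cong[THEN iffD1, OF refl _ cf])
    fix y assume "y \<in> h ` U"
    then have "inv_into U h y \<in> U" "h (inv_into U h y) = y"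
      by (auto simp: inv_into_into f_inv_into_f)
    then show "snd (\<phi> (inv_into U h y)) = f y" using phieq by (metis snd_conv)
  qed
  then show "isCont f \<theta>" using continuous_on_eq_continuous_at[OF oh] th by blast
qed

lemma irhs_mono:
  fixes M :: "('v::euclidean_space \<times> real) set" and f :: "'v \<Rightarrow> real"
  assumes "IRHS M"
    and Mf: "M = {(\<theta>, f \<theta>) | \<theta>. True}"
  shows "monotonic_on_line w v f"
proof -
  obtain g :: "'v \<Rightarrow> real" where eq: "M \<inter> (line w v \<times> {0..1}) = {(x, g x) | x. x \<in> line w v}"
    and mg: "monotonic_on_line w v g"
    using assms(1) unfolding IRHS_def by blast
  have sub: "M \<subseteq> UNIV \<times> {0..1}" using assms(1) unfolding IRHS_def by blast
  have fg: "f (w + a *\<^sub>R v) = g (w + a *\<^sub>R v)" for a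
  proof -
    let ?x = "w + a *\<^sub>R v"
    have xl: "?x \<in> line w v" unfolding line_def by blast
    have xm: "(?x, f ?x) \<in> M" using Mf by blast
    then have "f ?x \<in> {0..1}" using sub by blast
    then have "(?x, f ?x) \<in> M \<inter> (line w v \<times> {0..1})" using xm xl by blast
    then have "(?x, f ?x) \<in> {(x, g x) | x. x \<in> line w v}" using eq by simp
    then show ?thesis by auto
  qed
  show ?thesis using mg unfolding monotonic_on_line_def fg .
qed

lemma conv_less:
  fixes f :: "'v::euclidean_space \<Rightarrow> real"
  assumes mono: "\<And>w v. monotonic_on_line w v f"
  shows "convex {x. f x < c}" "convex (- {x. f x < c})"
proof -
  have key: "min (f x) (f y) \<le> f ((1 - u) *\<^sub>R x + u *\<^sub>R y) \<and> f ((1 - u) *\<^sub>R x + u *\<^sub>R y) \<le> max (f x) (f y)"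
    if u: "0 \<le> u" "u \<le> 1" for x y and u :: real
  proof -
    have e: "(1 - u) *\<^sub>R x + u *\<^sub>R y = x + u *\<^sub>R (y - x)" by (simp add: algebra_simps)
    have e0: "x + 0 *\<^sub>R (y - x) = x" and e1: "x + 1 *\<^sub>R (y - x) = y" by auto
    let ?g = "\<lambda>t. f (x + t *\<^sub>R (y - x))"
    have m: "(\<forall>a b. a \<le> b \<longrightarrow> ?g a \<le> ?g b) \<or> (\<forall>a b. a \<le> b \<longrightarrow> ?g b \<le> ?g a)"
      using mono[of x "y - x"] unfolding monotonic_on_line_def .
    have "(?g 0 \<le> ?g u \<and> ?g u \<le> ?g 1) \<or> (?g 0 \<ge> ?g u \<and> ?g u \<ge> ?g 1)"
      using m
    proof
      assume h: "\<forall>a b. a \<le> b \<longrightarrow> ?g a \<le> ?g b"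
      show ?thesis using h[rule_format, OF u(1)] h[rule_format, OF u(2)] by blast
    next
      assume h: "\<forall>a b. a \<le> b \<longrightarrow> ?g b \<le> ?g a"
      show ?thesis using h[rule_format, OF u(1)] h[rule_format, OF u(2)] by blast
    qed
    then have "(f x \<le> ?g u \<and> ?g u \<le> f y) \<or> (f x \<ge> ?g u \<and> ?g u \<ge> f y)"
      by (simp only: e0 e1)
    then show ?thesis unfolding e by linarith
  qed
  show "convex {x. f x < c}" unfolding convex_alt
  proof (intro ballI allI impI)
    fix x y and u :: real assume "x \<in> {x. f x < c}" "y \<in> {x. f x < c}" "0 \<le> u \<and> u \<le> 1"
    then show "(1 - u) *\<^sub>R x + u *\<^sub>R y \<in> {x. f x < c}" using key[of u x y] by (auto simp: max_def min_def split: if_splits)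
  qed
  show "convex (- {x. f x < c})" unfolding convex_alt
  proof (intro ballI allI impI)
    fix x y and u :: real assume "x \<in> - {x. f x < c}" "y \<in> - {x. f x < c}" "0 \<le> u \<and> u \<le> 1"
    then show "(1 - u) *\<^sub>R x + u *\<^sub>R y \<in> - {x. f x < c}" using key[of u x y] by (auto simp: max_def min_def split: if_splits)
  qed
qed

lemma halfspace:
  fixes S :: "'a::euclidean_space set"
  assumes "open S" "convex S" "convex (- S)" "S \<noteq> {}" "S \<noteq> UNIV"
  shows "\<exists>a b. a \<noteq> 0 \<and> S = {x. a \<bullet> x < b}"
proof -
  have "- S \<noteq> {}" using assms(5) by auto
  then obtain a b where a: "a \<noteq> 0" and s1: "\<forall>x\<in>S. a \<bullet> x \<le> b" and s2: "\<forall>x\<in>- S. a \<bullet> x \<ge> b"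
    using separating_hyperplane_sets[OF assms(2,3,4)] by blast
  have "S \<subseteq> {x. a \<bullet> x \<le> b}" using s1 by blast
  then have "S \<subseteq> interior {x. a \<bullet> x \<le> b}"
    using assms(1) by (rule interior_maximal)
  then have 1: "S \<subseteq> {x. a \<bullet> x < b}" using a by simp
  have 2: "{x. a \<bullet> x < b} \<subseteq> S"
  proof
    fix x assume "x \<in> {x. a \<bullet> x < b}"
    then have "\<not> a \<bullet> x \<ge> b" by simp
    then show "x \<in> S" using s2 by blast
  qed
  from 1 2 have "S = {x. a \<bullet> x < b}" by (rule subset_antisym)
  then show ?thesis using a by blast
qed

lemma line_lt:
  fixes a :: "'a::euclidean_space"
  assumes "\<forall>t::real. a \<bullet> (x0 + t *\<^sub>R v) < b"
  shows "a \<bullet> v = 0"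
proof (rule ccontr)
  assume h: "a \<bullet> v \<noteq> 0"
  have "a \<bullet> (x0 + ((b - a \<bullet> x0) / (a \<bullet> v)) *\<^sub>R v) = b"
    using h by (simp add: inner_add_right)
  with assms show False by (metis less_irrefl)
qed

lemma line_ge:
  fixes a :: "'a::euclidean_space"
  assumes "\<forall>t::real. \<not> a \<bullet> (x0 + t *\<^sub>R v) < b"
  shows "a \<bullet> v = 0"
proof (rule ccontr)
  assume h: "a \<bullet> v \<noteq> 0"
  have "a \<bullet> (x0 + ((b - 1 - a \<bullet> x0) / (a \<bullet> v)) *\<^sub>R v) = b - 1"
    using h by (simp add: inner_add_right)
  then show False using assms[rule_format, of "(b - 1 - a \<bullet> x0) / (a \<bullet> v)"] by simp
qed

theorem theorem2:
  fixes M :: "('v::euclidean_space \<times> real) set" and f :: "'v \<Rightarrow> real"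
  assumes "IRHS M"
    and "M = {(\<theta>, f \<theta>) | \<theta>. True}"
  shows "\<exists>H u. subspace H \<and> dim H = DIM('v) - 1 \<and> u \<notin> H \<and>
           (\<forall>\<mu>::real. \<forall>h\<in>H. f (\<mu> *\<^sub>R u + h) = f (\<mu> *\<^sub>R u)) \<and>
           monotonic_on_line 0 u f"
proof -
  have mono: "\<And>w v. monotonic_on_line w v f" using irhs_mono[OF assms] .
  have cont: "continuous_on UNIV f" using irhs_cont[OF assms] .
  have inv: "\<exists>a. a \<noteq> 0 \<and> (\<forall>x v. a \<bullet> v = 0 \<longrightarrow> f (x + v) = f x)"
  proof (cases "\<forall>x. f x = f 0")
    case True
    obtain e :: 'v where "e \<in> Basis" using nonempty_Basis by blast
    then have "e \<noteq> 0" by auto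
    then show ?thesis using True by metis
  next
    case False
    then obtain p q where pq: "f p < f q" by (metis linorder_neqE_linordered_idom)
    define S where "S c = {x. f x < c}" for c
    have P: "\<exists>a b. a \<noteq> 0 \<and> S c = {x. a \<bullet> x < b}" if "S c \<noteq> {}" "S c \<noteq> UNIV" for c
    proof (rule halfspace)
      show "open (S c)" unfolding S_def
        using cont by (intro open_Collect_less) (auto intro: continuous_intros)
      show "convex (S c)" "convex (- S c)" unfolding S_def using conv_less[OF mono] by auto
    qed (use that in auto)
    obtain a b where a: "a \<noteq> 0" and S0: "S (f q) = {x. a \<bullet> x < b}"
      using P[of "f q"] pq unfolding S_def by blast
    have pS: "a \<bullet> p < b" and qS: "\<not> a \<bullet> q < b" using S0 pq unfolding S_def by auto
    have key: "\<not> f x < f (x + v)" if av: "a \<bullet> v = 0" for x v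
    proof
      assume lt: "f x < f (x + v)"
      let ?c = "f (x + v)"
      obtain a' b' where Sc: "S ?c = {x. a' \<bullet> x < b'}"
        using P[of ?c] lt unfolding S_def by blast
      have a'v: "a' \<bullet> v = 0"
      proof (cases "?c \<le> f q")
        case True
        have "\<forall>t::real. \<not> a' \<bullet> (q + t *\<^sub>R v) < b'"
        proof
          fix t :: real
          have "a \<bullet> (q + t *\<^sub>R v) = a \<bullet> q" using av by (simp add: inner_add_right)
          then have "q + t *\<^sub>R v \<notin> S (f q)" using S0 qS by simp
          then have "q + t *\<^sub>R v \<notin> S ?c" using True unfolding S_def by auto
          then show "\<not> a' \<bullet> (q + t *\<^sub>R v) < b'" using Sc by simp
        qed
        then show ?thesis by (rule line_ge)
      next
        case False
        have "\<forall>t::real. a' \<bullet> (p + t *\<^sub>R v) < b'"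
        proof
          fix t :: real
          have "a \<bullet> (p + t *\<^sub>R v) = a \<bullet> p" using av by (simp add: inner_add_right)
          then have "p + t *\<^sub>R v \<in> S (f q)" using S0 pS by simp
          then have "p + t *\<^sub>R v \<in> S ?c" using False unfolding S_def by auto
          then show "a' \<bullet> (p + t *\<^sub>R v) < b'" using Sc by simp
        qed
        then show ?thesis by (rule line_lt)
      qed
      have "x \<in> S ?c" using lt unfolding S_def by simp
      then have "a' \<bullet> (x + v) < b'" using Sc a'v by (simp add: inner_add_right)
      then have "x + v \<in> S ?c" using Sc by simp
      then show False unfolding S_def by simp
    qed
    have "f (x + v) = f x" if "a \<bullet> v = 0" for x v
    proof -
      have "\<not> f (x + v) < f ((x + v) + (- v))" using key[of "- v" "x + v"] that by simp
      then show ?thesis using key[OF that, of x] by simp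
    qed
    then show ?thesis using a by blast
  qed
  then obtain a where a: "a \<noteq> 0" and ia: "\<And>x v. a \<bullet> v = 0 \<Longrightarrow> f (x + v) = f x" by blast
  show ?thesis
  proof (intro exI conjI)
    show "subspace {x. a \<bullet> x = 0}" by (rule subspace_hyperplane)
    show "dim {x. a \<bullet> x = 0} = DIM('v) - 1" by (rule dim_hyperplane[OF a])
    show "a \<notin> {x. a \<bullet> x = 0}" using a by simp
    show "\<forall>\<mu>::real. \<forall>h\<in>{x. a \<bullet> x = 0}. f (\<mu> *\<^sub>R a + h) = f (\<mu> *\<^sub>R a)" using ia by blast
    show "monotonic_on_line 0 a f" by (rule mono)
  qed
qed

end
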